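(* The restrictions $\rho(x_1),\dots,\rho(x_N)$ are algebraically independent generators of the coordinate algebra $F[S]$ of the affine subspace $S=f+V\subseteq\mathfrak{g}_e^*$.
   Context: $F$ is an algebraically closed field of characteristic zero; $\lambda=(\lambda_1,\dots,\lambda_n)$ is a composition of $N$ with positive parts and $\lambda_1\le\cdots\le\lambda_n$; $s_{i,j}:=\lambda_j-\min(\lambda_i,\lambda_j)$. $e\in\mathfrak{gl}_N(F)$ is the nilpotent matrix with Jordan blocks $\lambda_1,\dots,\lambda_n$ down the diagonal and $\mathfrak{g}_e$ its centralizer. With the diagram whose row $i$ has $\lambda_i$ boxes, filled with $1,\dots,N$ along rows, and $\mathrm{row}(h),\mathrm{col}(h)$ the row/column of $h$, set $e_{i,j;r}:=\sum_{\mathrm{row}(h)=i,\mathrm{row}(k)=j,\mathrm{col}(k)-\mathrm{col}(h)=r}e_{h,k}$ for $s_{i,j}\le r<\lambda_j$; these form a basis of $\mathfrak{g}_e$. Let $\{f_{i,j;r}\}$ be the dual basis of $\mathfrak{g}_e^*$. Identify $S(\mathfrak{g}_e)$ with the coordinate algebra $F[\mathfrak{g}_e^*]$. Let $f:=f_{1,2;\lambda_2-1}+f_{2,3;\lambda_3-1}+\cdots+f_{n-1,n;\lambda_n-1}$, let $V$ be the span of $\{f_{n,i;r}:1\le i\le n,\ 0\le r<\lambda_i\}$, $S:=f+V$, and $\rho:F[\mathfrak{g}_e^*]\to F[S]$ restriction of functions. $(d_1,\dots,d_N)$ consists of $\lambda_n$ copies of $1$, then $\lambda_{n-1}$ copies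 of $2$, ..., then $\lambda_1$ copies of $n$. For $\mu\subseteq\lambda$ ($0\le\mu_i\le\lambda_i$), $|\mu|=\sum\mu_i$, $\ell(\mu)$ = number of nonzero parts. For $r=1,\dots,N$ with $d=d_r$, $x_r:=\sum_{\mu\subseteq\lambda,\ |\mu|=r,\ \ell(\mu)=d}\sum_{w\in S_d}\mathrm{sgn}(w)\,e_{i_{w1},i_1;\mu_{i_1}-1}\cdots e_{i_{wd},i_d;\mu_{i_d}-1}\in S(\mathfrak{g}_e)$, where $i_1<\cdots<i_d$ are the positions of the nonzero entries of $\mu$. *)

theory Defs
  imports "HOL-Computational_Algebra.Polynomial" "HOL-Library.Poly_Mapping"
    "HOL-Combinatorics.Permutations"
begin

type_synonym ('v, 'a) mpoly = "('v \<Rightarrow>\<^sub>0 nat) \<Rightarrow>\<^sub>0 'a"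

definition mp_const :: "'a::comm_ring_1 \<Rightarrow> ('v, 'a) mpoly" where
  "mp_const c = Poly_Mapping.single 0 c"

definition mp_var :: "'v \<Rightarrow> ('v, 'a::comm_ring_1) mpoly" where
  "mp_var v = Poly_Mapping.single (Poly_Mapping.single v 1) 1"

definition mp_vars :: "('v, 'a::zero) mpoly \<Rightarrow> 'v set" where
  "mp_vars p = \<Union> (Poly_Mapping.keys ` Poly_Mapping.keys p)"

definition mp_subst :: "('v \<Rightarrow> ('w, 'a::comm_ring_1) mpoly) \<Rightarrow> ('v, 'a) mpoly \<Rightarrow> ('w, 'a) mpoly" where
  "mp_subst \<sigma> p = (\<Sum>m\<in>Poly_Mapping.keys p. mp_const (Poly_Mapping.lookup p m) * (\<Prod>v\<in>Poly_Mapping.keys m. \<sigma> v ^ Poly_Mapping.lookup m v))"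

text \<open>lam i is lambda_i for 1 <= i <= n.\<close>
definition sij :: "(nat \<Rightarrow> nat) \<Rightarrow> nat \<Rightarrow> nat \<Rightarrow> nat" where
  "sij lam i j = lam j - min (lam i) (lam j)"

text \<open>S(g_e) = F[g_e^*] is the polynomial ring in the basis vectors e_{i,j;r}
  (s_{i,j} <= r < lambda_j), modelled with variables (i,j,r).
  Convention: e_{i,j;r} = 0 for r outside [s_{i,j}, lambda_j).\<close>
definition e_elt :: "(nat \<Rightarrow> nat) \<Rightarrow> nat \<Rightarrow> nat \<Rightarrow> nat \<Rightarrow> (nat \<times> nat \<times> nat, 'a::comm_ring_1) mpoly" where
  "e_elt lam i j r = (if sij lam i j \<le> r \<and> r < lam j then mp_var (i, j, r) else 0)"

definition bigN :: "(nat \<Rightarrow> nat) \<Rightarrow> nat \<Rightarrow> nat" where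
  "bigN lam n = (\<Sum>i=1..n. lam i)"

definition dseq :: "(nat \<Rightarrow> nat) \<Rightarrow> nat \<Rightarrow> nat list" where
  "dseq lam n = concat (map (\<lambda>d. replicate (lam (n + 1 - d)) d) [1..<n+1])"

definition dr :: "(nat \<Rightarrow> nat) \<Rightarrow> nat \<Rightarrow> nat \<Rightarrow> nat" where
  "dr lam n r = dseq lam n ! (r - 1)"

definition subcomps :: "(nat \<Rightarrow> nat) \<Rightarrow> nat \<Rightarrow> (nat \<Rightarrow> nat) set" where
  "subcomps lam n = {\<mu>. (\<forall>i\<in>{1..n}. \<mu> i \<le> lam i) \<and> (\<forall>i. i \<notin> {1..n} \<longrightarrow> \<mu> i = 0)}"

definition msize :: "nat \<Rightarrow> (nat \<Rightarrow> nat) \<Rightarrow> nat" where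
  "msize n \<mu> = (\<Sum>i=1..n. \<mu> i)"

definition mpos :: "nat \<Rightarrow> (nat \<Rightarrow> nat) \<Rightarrow> nat set" where
  "mpos n \<mu> = {i\<in>{1..n}. \<mu> i \<noteq> 0}"

definition mlen :: "nat \<Rightarrow> (nat \<Rightarrow> nat) \<Rightarrow> nat" where
  "mlen n \<mu> = card (mpos n \<mu>)"

text \<open>x_r in S(g_e). The positions i_1 < ... < i_d are the entries of the sorted list
  "is" (0-indexed: i_{k+1} = is ! k), and S_d is realised as permutations of {0..<d}.\<close>
definition xr :: "(nat \<Rightarrow> nat) \<Rightarrow> nat \<Rightarrow> nat \<Rightarrow> (nat \<times> nat \<times> nat, 'a::comm_ring_1) mpoly" where
  "xr lam n r =
     (let d = dr lam n r in
      \<Sum>\<mu> \<in> {\<mu> \<in> subcomps lam n. msize n \<mu> = r \<and> mlen n \<mu> = d}.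
        (let is = sorted_list_of_set (mpos n \<mu>) in
         \<Sum>w \<in> {w. w permutes {0..<d}}.
           of_int (sign w) * (\<Prod>k<d. e_elt lam (is ! (w k)) (is ! k) (\<mu> (is ! k) - 1))))"

text \<open>F[S] for S = f + V: the polynomial ring in the affine coordinates t_{b,r}
  (1 <= b <= n, 0 <= r < lambda_b) of the point f + sum t_{b,r} f_{n,b;r}.
  The restriction rho sends e_{a,b;r} to its value at that point, i.e. to
  [a<n, b=a+1, r=lambda_b - 1] + [a=n] t_{b,r}.\<close>
definition rho_var :: "(nat \<Rightarrow> nat) \<Rightarrow> nat \<Rightarrow> nat \<times> nat \<times> nat \<Rightarrow> (nat \<times> nat, 'a::comm_ring_1) mpoly" where
  "rho_var lam n v = (case v of (a, b, r) \<Rightarrow>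
      mp_const (if 1 \<le> a \<and> a < n \<and> b = a + 1 \<and> r = lam b - 1 then 1 else 0)
      + (if a = n \<and> 1 \<le> b \<and> b \<le> n \<and> r < lam b then mp_var (b, r) else 0))"

definition rho :: "(nat \<Rightarrow> nat) \<Rightarrow> nat \<Rightarrow> (nat \<times> nat \<times> nat, 'a::comm_ring_1) mpoly \<Rightarrow> (nat \<times> nat, 'a) mpoly" where
  "rho lam n = mp_subst (rho_var lam n)"

definition Scoords :: "(nat \<Rightarrow> nat) \<Rightarrow> nat \<Rightarrow> (nat \<times> nat) set" where
  "Scoords lam n = {(b, r). 1 \<le> b \<and> b \<le> n \<and> r < lam b}"

definition Phi :: "(nat \<Rightarrow> nat) \<Rightarrow> nat \<Rightarrow> (nat, 'a::comm_ring_1) mpoly \<Rightarrow> (nat \<times> nat, 'a) mpoly" where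
  "Phi lam n = mp_subst (\<lambda>k. if k \<in> {1..bigN lam n} then rho lam n (xr lam n k) else 0)"

end

theory Submission
  imports Defs
begin

definition mmono :: "('v \<Rightarrow> ('w, 'a::comm_ring_1) mpoly) \<Rightarrow> ('v \<Rightarrow>\<^sub>0 nat) \<Rightarrow> ('w, 'a) mpoly" where
  "mmono \<sigma> m = (\<Prod>v\<in>Poly_Mapping.keys m. \<sigma> v ^ Poly_Mapping.lookup m v)"

lemma mmono_superset:
  assumes "finite T" "Poly_Mapping.keys m \<subseteq> T"
  shows "mmono \<sigma> m = (\<Prod>v\<in>T. \<sigma> v ^ Poly_Mapping.lookup m v)"
  unfolding mmono_def
  by (rule prod.mono_neutral_left) (use assms in \<open>auto simp: in_keys_iff\<close>)

lemma mmono_add: "mmono \<sigma> (m1 + m2) = mmono \<sigma> m1 * mmono \<sigma> m2"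
proof -
  let ?T = "Poly_Mapping.keys m1 \<union> Poly_Mapping.keys m2"
  have "mmono \<sigma> (m1 + m2) = (\<Prod>v\<in>?T. \<sigma> v ^ Poly_Mapping.lookup (m1 + m2) v)"
    by (rule mmono_superset) (use keys_add[of m1 m2] in auto)
  also have "\<dots> = (\<Prod>v\<in>?T. \<sigma> v ^ Poly_Mapping.lookup m1 v) * (\<Prod>v\<in>?T. \<sigma> v ^ Poly_Mapping.lookup m2 v)"
    by (simp add: lookup_add power_add prod.distrib)
  also have "\<dots> = mmono \<sigma> m1 * mmono \<sigma> m2"
    by (simp add: mmono_superset[where T="?T"])
  finally show ?thesis .
qed

lemma mmono_zero [simp]: "mmono \<sigma> 0 = 1"
  by (simp add: mmono_def)

lemma mp_const_0 [simp]: "mp_const 0 = 0"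
  by (simp add: mp_const_def)

lemma mp_const_1 [simp]: "mp_const 1 = 1"
  by (simp add: mp_const_def)

lemma mp_const_mult: "mp_const (a * b) = mp_const a * mp_const b"
  by (simp add: mp_const_def mult_single)

lemma mp_const_add: "mp_const (a + b) = mp_const a + mp_const b"
  by (simp add: mp_const_def single_add)

lemma mp_subst_alt: "mp_subst \<sigma> p = (\<Sum>m\<in>Poly_Mapping.keys p. mp_const (Poly_Mapping.lookup p m) * mmono \<sigma> m)"
  by (simp add: mp_subst_def mmono_def)

lemma mp_subst_superset:
  assumes "finite S" "Poly_Mapping.keys p \<subseteq> S"
  shows "mp_subst \<sigma> p = (\<Sum>m\<in>S. mp_const (Poly_Mapping.lookup p m) * mmono \<sigma> m)"
  unfolding mp_subst_alt
  by (rule sum.mono_neutral_left) (use assms in \<open>auto simp: in_keys_iff\<close>)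

lemma mp_subst_add: "mp_subst \<sigma> (p + q) = mp_subst \<sigma> p + mp_subst \<sigma> q"
proof -
  let ?S = "Poly_Mapping.keys p \<union> Poly_Mapping.keys q"
  have "mp_subst \<sigma> (p + q) = (\<Sum>m\<in>?S. mp_const (Poly_Mapping.lookup (p + q) m) * mmono \<sigma> m)"
    by (rule mp_subst_superset) (use keys_add[of p q] in auto)
  also have "\<dots> = (\<Sum>m\<in>?S. mp_const (Poly_Mapping.lookup p m) * mmono \<sigma> m) + (\<Sum>m\<in>?S. mp_const (Poly_Mapping.lookup q m) * mmono \<sigma> m)"
    by (simp add: lookup_add mp_const_add distrib_right sum.distrib)
  also have "\<dots> = mp_subst \<sigma> p + mp_subst \<sigma> q"
    by (simp add: mp_subst_superset[where S="?S"])
  finally show ?thesis .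
qed

lemma mp_subst_0 [simp]: "mp_subst \<sigma> 0 = 0"
  by (simp add: mp_subst_def)

lemma mp_subst_single: "mp_subst \<sigma> (Poly_Mapping.single m c) = mp_const c * mmono \<sigma> m"
  by (subst mp_subst_superset[of "{m}"]) auto

lemma mp_subst_sum: "mp_subst \<sigma> (\<Sum>i\<in>I. f i) = (\<Sum>i\<in>I. mp_subst \<sigma> (f i))"
  by (induction I rule: infinite_finite_induct) (auto simp: mp_subst_add)

lemma pm_repr: "p = (\<Sum>m\<in>Poly_Mapping.keys p. Poly_Mapping.single m (Poly_Mapping.lookup p m))"
  by (rule poly_mapping_eqI) (auto simp: lookup_sum lookup_single when_def in_keys_iff
      intro!: sum.neutral  trans[OF _ sum.remove[symmetric]])

lemma mp_subst_mult: "mp_subst \<sigma> (p * q) = mp_subst \<sigma> p * mp_subst \<sigma> q"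
proof -
  let ?P = "Poly_Mapping.keys p" and ?Q = "Poly_Mapping.keys q"
  let ?a = "Poly_Mapping.lookup p" and ?b = "Poly_Mapping.lookup q"
  have "p * q = (\<Sum>m\<in>?P. Poly_Mapping.single m (?a m)) * (\<Sum>m'\<in>?Q. Poly_Mapping.single m' (?b m'))"
    using pm_repr[of p] pm_repr[of q] by simp
  also have "\<dots> = (\<Sum>m\<in>?P. \<Sum>m'\<in>?Q. Poly_Mapping.single (m + m') (?a m * ?b m'))"
    by (simp add: sum_product mult_single)
  finally have "mp_subst \<sigma> (p * q) = (\<Sum>m\<in>?P. \<Sum>m'\<in>?Q. mp_const (?a m * ?b m') * mmono \<sigma> (m + m'))"
    by (simp add: mp_subst_sum mp_subst_single)
  also have "\<dots> = (\<Sum>m\<in>?P. \<Sum>m'\<in>?Q. (mp_const (?a m) * mmono \<sigma> m) * (mp_const (?b m') * mmono \<sigma> m'))"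
    by (simp add: mp_const_mult mmono_add algebra_simps)
  also have "\<dots> = mp_subst \<sigma> p * mp_subst \<sigma> q"
    by (simp add: mp_subst_alt sum_product)
  finally show ?thesis .
qed

lemma mp_subst_one [simp]: "mp_subst \<sigma> 1 = 1"
  using mp_subst_single[of \<sigma> 0 1] by (simp add: mp_const_def)

lemma mp_subst_const [simp]: "mp_subst \<sigma> (mp_const c) = mp_const c"
  unfolding mp_const_def by (simp add: mp_subst_single mp_const_def)

lemma mp_subst_of_int [simp]: "mp_subst \<sigma> (of_int k) = of_int k"
  using mp_subst_const[of \<sigma> "of_int k"] by (simp add: mp_const_def)

lemma mp_subst_var [simp]: "mp_subst \<sigma> (mp_var v) = \<sigma> v"
  unfolding mp_var_def by (simp add: mp_subst_single mmono_def)

lemma mp_subst_prod: "mp_subst \<sigma> (\<Prod>i\<in>I. f i) = (\<Prod>i\<in>I. mp_subst \<sigma> (f i))"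
  by (induction I rule: infinite_finite_induct) (auto simp: mp_subst_mult)

lemma mp_subst_power: "mp_subst \<sigma> (p ^ k) = mp_subst \<sigma> p ^ k"
  by (induction k) (auto simp: mp_subst_mult)

lemma mp_subst_cong:
  assumes "\<And>v. v \<in> mp_vars p \<Longrightarrow> \<sigma> v = \<sigma>' v"
  shows "mp_subst \<sigma> p = mp_subst \<sigma>' p"
proof -
  have "\<forall>m\<in>Poly_Mapping.keys p. \<forall>v\<in>Poly_Mapping.keys m. \<sigma> v = \<sigma>' v"
    using assms unfolding mp_vars_def by blast
  then show ?thesis unfolding mp_subst_def
    by (intro sum.cong refl arg_cong2[where f="(*)"] prod.cong) auto
qed

lemma single_var_power: "Poly_Mapping.single (Poly_Mapping.single v (1::nat)) (1::'a::comm_ring_1) ^ j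
   = Poly_Mapping.single (Poly_Mapping.single v j) 1"
  by (induction j) (auto simp: mult_single single_add[symmetric])

lemma prod_single_one: "(\<Prod>v\<in>K. Poly_Mapping.single (f v) (1::'a::comm_ring_1)) = Poly_Mapping.single (\<Sum>v\<in>K. f v) 1"
  by (induction K rule: infinite_finite_induct) (auto simp: mult_single)

lemma mmono_var: "mmono mp_var m = (Poly_Mapping.single m 1 :: ('v, 'a::comm_ring_1) mpoly)"
proof -
  have "mmono mp_var m = (\<Prod>v\<in>Poly_Mapping.keys m. Poly_Mapping.single (Poly_Mapping.single v (Poly_Mapping.lookup m v)) (1::'a))"
    unfolding mmono_def mp_var_def single_var_power by (rule refl)
  also have "\<dots> = Poly_Mapping.single m 1"
    by (subst (2) pm_repr[of m]) (simp add: prod_single_one)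
  finally show ?thesis .
qed

lemma mp_subst_var_id [simp]: "mp_subst mp_var p = p"
  by (subst (2) pm_repr[of p]) (simp add: mp_subst_alt mmono_var mp_const_def mult_single)

lemma mp_subst_comp: "mp_subst \<tau> (mp_subst \<sigma> p) = mp_subst (\<lambda>v. mp_subst \<tau> (\<sigma> v)) p"
proof -
  have "mp_subst \<tau> (mp_subst \<sigma> p) = mp_subst \<tau> (\<Sum>m\<in>Poly_Mapping.keys p. mp_const (Poly_Mapping.lookup p m) * mmono \<sigma> m)"
    by (simp only: mp_subst_alt[of \<sigma> p])
  also have "\<dots> = (\<Sum>m\<in>Poly_Mapping.keys p. mp_const (Poly_Mapping.lookup p m) * mmono (\<lambda>v. mp_subst \<tau> (\<sigma> v)) m)"
    by (simp add: mp_subst_sum mp_subst_mult mp_subst_prod mp_subst_power mmono_def)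
  also have "\<dots> = mp_subst (\<lambda>v. mp_subst \<tau> (\<sigma> v)) p"
    by (rule mp_subst_alt[symmetric])
  finally show ?thesis .
qed

lemma mp_vars_add: "mp_vars (p + q) \<subseteq> mp_vars p \<union> mp_vars q"
  unfolding mp_vars_def using keys_add[of p q] by blast

lemma mp_vars_mult: "mp_vars (p * q) \<subseteq> mp_vars p \<union> mp_vars q"
proof
  fix v assume "v \<in> mp_vars (p * q)"
  then obtain m where m: "m \<in> Poly_Mapping.keys (p * q)" "v \<in> Poly_Mapping.keys m"
    by (auto simp: mp_vars_def)
  then obtain a b where "m = a + b" "a \<in> Poly_Mapping.keys p" "b \<in> Poly_Mapping.keys q"
    using keys_mult[of p q] by blast
  then show "v \<in> mp_vars p \<union> mp_vars q"
    using m(2) keys_add[of a b] by (auto simp: mp_vars_def)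
qed

lemma mp_vars_const [simp]: "mp_vars (mp_const c) = {}"
  by (simp add: mp_vars_def mp_const_def)

lemma mp_vars_one [simp]: "mp_vars 1 = {}"
  by (simp add: mp_vars_def)

lemma mp_vars_zero [simp]: "mp_vars 0 = {}"
  by (simp add: mp_vars_def)

lemma mp_vars_of_int [simp]: "mp_vars (of_int k :: ('v,'a::comm_ring_1) mpoly) = {}"
  using mp_vars_const[of "of_int k"] by (simp add: mp_const_def)

lemma mp_vars_var: "mp_vars (mp_var v :: ('v,'a::comm_ring_1) mpoly) \<subseteq> {v}"
  by (simp add: mp_vars_def mp_var_def)

lemma mp_vars_sum: "mp_vars (\<Sum>i\<in>I. f i) \<subseteq> (\<Union>i\<in>I. mp_vars (f i))"
  by (induction I rule: infinite_finite_induct) (use mp_vars_add in fastforce)+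

lemma mp_vars_prod: "mp_vars (\<Prod>i\<in>I. f i :: ('v,'a::comm_ring_1) mpoly) \<subseteq> (\<Union>i\<in>I. mp_vars (f i))"
  by (induction I rule: infinite_finite_induct) (use mp_vars_mult in fastforce)+

lemma mp_vars_power: "mp_vars (p ^ k :: ('v,'a::comm_ring_1) mpoly) \<subseteq> mp_vars p"
  by (induction k) (use mp_vars_mult in fastforce)+

lemma mp_vars_subst: "mp_vars (mp_subst \<sigma> p) \<subseteq> (\<Union>v\<in>mp_vars p. mp_vars (\<sigma> v))"
proof -
  have "mp_vars (mp_subst \<sigma> p) \<subseteq> (\<Union>m\<in>Poly_Mapping.keys p. mp_vars (mp_const (Poly_Mapping.lookup p m) * mmono \<sigma> m))"
    unfolding mp_subst_alt by (rule mp_vars_sum)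
  also have "\<dots> \<subseteq> (\<Union>m\<in>Poly_Mapping.keys p. \<Union>v\<in>Poly_Mapping.keys m. mp_vars (\<sigma> v ^ Poly_Mapping.lookup m v))"
    using mp_vars_mult mp_vars_prod unfolding mmono_def by fastforce
  also have "\<dots> \<subseteq> (\<Union>v\<in>mp_vars p. mp_vars (\<sigma> v))"
    using mp_vars_power unfolding mp_vars_def by fastforce
  finally show ?thesis .
qed

definition Tsum :: "(nat \<Rightarrow> nat) \<Rightarrow> nat \<Rightarrow> nat \<Rightarrow> nat" where
  "Tsum lam n d = (\<Sum>j\<in>{n+1-d..n}. lam j)"

definition piF :: "(nat \<Rightarrow> nat) \<Rightarrow> nat \<Rightarrow> nat \<Rightarrow> nat \<times> nat" where
  "piF lam n r = (n + 1 - dr lam n r, r - Tsum lam n (dr lam n r - 1) - 1)"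

definition psiF :: "(nat \<Rightarrow> nat) \<Rightarrow> nat \<Rightarrow> nat \<times> nat \<Rightarrow> nat" where
  "psiF lam n v = Tsum lam n (n - fst v) + snd v + 1"

lemma Tsum_0 [simp]: "Tsum lam n 0 = 0"
  by (simp add: Tsum_def)

lemma Tsum_Suc: "d < n \<Longrightarrow> Tsum lam n (Suc d) = lam (n - d) + Tsum lam n d"
proof -
  assume d: "d < n"
  have "{n + 1 - Suc d..n} = insert (n - d) {n + 1 - d..n}" using d by auto
  then show ?thesis using d by (simp add: Tsum_def)
qed

lemma Tsum_n: "Tsum lam n n = bigN lam n"
  by (simp add: Tsum_def bigN_def)

lemma Tsum_mono: "d \<le> d' \<Longrightarrow> Tsum lam n d \<le> Tsum lam n d'"
  unfolding Tsum_def by (rule sum_mono2) auto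

lemma dseq_aux:
  assumes "k \<le> n"
  shows "length (concat (map (\<lambda>d. replicate (lam (n + 1 - d)) d) [1..<k+1])) = Tsum lam n k
    \<and> (\<forall>d i. 1 \<le> d \<longrightarrow> d \<le> k \<longrightarrow> Tsum lam n (d - 1) \<le> i \<longrightarrow> i < Tsum lam n d \<longrightarrow>
        concat (map (\<lambda>d. replicate (lam (n + 1 - d)) d) [1..<k+1]) ! i = d)"
  using assms
proof (induction k)
  case 0
  then show ?case by simp
next
  case (Suc k)
  let ?f = "\<lambda>d. replicate (lam (n + 1 - d)) d"
  let ?A = "concat (map ?f [1..<k+1])"
  have kn: "k < n" using Suc.prems by simp
  have IH: "length ?A = Tsum lam n k"
     "\<And>d i. 1 \<le> d \<Longrightarrow> d \<le> k \<Longrightarrow> Tsum lam n (d - 1) \<le> i \<Longrightarrow> i < Tsum lam n d \<Longrightarrow> ?A ! i = d"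
    using Suc.IH kn by auto
  have eq: "concat (map ?f [1..<Suc k+1]) = ?A @ replicate (lam (n - k)) (Suc k)"
    by simp
  have TS: "Tsum lam n (Suc k) = lam (n - k) + Tsum lam n k" using Tsum_Suc[OF kn] .
  show ?case
  proof (intro conjI allI impI)
    show "length (concat (map ?f [1..<Suc k+1])) = Tsum lam n (Suc k)"
      unfolding eq using IH(1) TS by simp
  next
    fix d i assume d: "1 \<le> d" "d \<le> Suc k" and i: "Tsum lam n (d - 1) \<le> i" "i < Tsum lam n d"
    show "concat (map ?f [1..<Suc k+1]) ! i = d"
    proof (cases "d \<le> k")
      case True
      have "i < length ?A" using i(2) Tsum_mono[OF True, of lam n] IH(1) by simp
      then show ?thesis unfolding eq using IH(2)[OF d(1) True i] by (simp add: nth_append)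
    next
      case False
      then have dk: "d = Suc k" using d by simp
      then have "\<not> i < length ?A" using i(1) IH(1) by simp
      moreover have "i - length ?A < lam (n - k)" using i dk IH(1) TS by simp
      ultimately show ?thesis unfolding eq using dk by (simp add: nth_append)
    qed
  qed
qed

lemma dr_eq:
  assumes "1 \<le> d" "d \<le> n" "Tsum lam n (d - 1) \<le> r - 1" "r - 1 < Tsum lam n d"
  shows "dr lam n r = d"
proof -
  have "concat (map (\<lambda>d. replicate (lam (n + 1 - d)) d) [1..<n+1]) ! (r - 1) = d"
    using dseq_aux[of n n lam] assms by blast
  then show ?thesis by (simp only: dr_def dseq_def)
qed

lemma dr_exists:
  assumes r: "r \<in> {1..bigN lam n}"
  shows "1 \<le> dr lam n r \<and> dr lam n r \<le> n \<and> Tsum lam n (dr lam n r - 1) \<le> r - 1 \<and> r - 1 < Tsum lam n (dr lam n r)"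
proof -
  define d where "d = (LEAST d. r - 1 < Tsum lam n d)"
  have ex: "r - 1 < Tsum lam n n" using r Tsum_n[of lam n] by auto
  have d1: "r - 1 < Tsum lam n d" unfolding d_def by (rule LeastI[of _ n]) (rule ex)
  have d2: "d \<le> n" unfolding d_def by (rule Least_le) (rule ex)
  have d3: "d \<noteq> 0"
  proof
    assume "d = 0" then show False using d1 by simp
  qed
  have d4: "\<not> r - 1 < Tsum lam n (d - 1)"
    unfolding d_def by (rule not_less_Least) (use d3 in \<open>simp add: d_def\<close>)
  have "dr lam n r = d" using d1 d2 d3 d4 by (intro dr_eq) auto
  then show ?thesis using d1 d2 d3 d4 by auto
qed

lemma pi_psi:
  assumes r: "r \<in> {1..bigN lam n}"
  shows "piF lam n r \<in> Scoords lam n \<and> psiF lam n (piF lam n r) = r"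
proof -
  define d where "d = dr lam n r"
  have d: "1 \<le> d" "d \<le> n" "Tsum lam n (d - 1) \<le> r - 1" "r - 1 < Tsum lam n d"
    using dr_exists[OF r] by (auto simp: d_def)
  have TS: "Tsum lam n d = lam (n + 1 - d) + Tsum lam n (d - 1)"
    using Tsum_Suc[of "d - 1" n lam] d by (simp add: Suc_diff_1)
  have e1: "n - (n + 1 - d) = d - 1" using d by simp
  have e2: "r - Tsum lam n (d - 1) - 1 < lam (n + 1 - d)" using d(3) d(4) TS by arith
  have e3: "Tsum lam n (d - 1) + (r - Tsum lam n (d - 1) - 1) + 1 = r" using d(3) r by auto
  have e4: "1 \<le> n + 1 - d" "n + 1 - d \<le> n" using d by auto
  show ?thesis using d e1 e2 e3 e4 by (auto simp: piF_def psiF_def Scoords_def d_def[symmetric])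
qed

lemma psi_pi:
  assumes v: "v \<in> Scoords lam n"
  shows "psiF lam n v \<in> {1..bigN lam n} \<and> piF lam n (psiF lam n v) = v"
proof -
  obtain b t where bt: "v = (b, t)" "1 \<le> b" "b \<le> n" "t < lam b" using v by (auto simp: Scoords_def)
  define d where "d = n + 1 - b"
  have d: "1 \<le> d" "d \<le> n" "d - 1 = n - b" "n + 1 - d = b" using bt by (auto simp: d_def)
  have TS: "Tsum lam n d = lam b + Tsum lam n (n - b)"
    using Tsum_Suc[of "n - b" n lam] bt by (simp add: d_def Suc_diff_le)
  have r: "psiF lam n v = Tsum lam n (n - b) + t + 1" by (simp add: psiF_def bt)
  have dr: "dr lam n (psiF lam n v) = d"
    by (rule dr_eq) (use d TS bt r in auto)
  have "Tsum lam n d \<le> bigN lam n" using Tsum_mono[OF d(2), of lam n] Tsum_n by simp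
  then show ?thesis using r dr d TS bt by (auto simp: piF_def)
qed

lemma rho_e:
  assumes pos: "\<forall>i\<in>{1..n}. 0 < lam i"
    and mono: "\<forall>i j. 1 \<le> i \<longrightarrow> i \<le> j \<longrightarrow> j \<le> n \<longrightarrow> lam i \<le> lam j"
    and a: "a \<in> {1..n}" and j: "j \<in> {1..n}" and u: "1 \<le> u" "u \<le> lam j"
  shows "mp_subst (rho_var lam n) (e_elt lam a j (u - 1)) =
    (if a = n then mp_var (j, u - 1) else if j = a + 1 \<and> u = lam j then 1 else (0 :: (nat \<times> nat, 'a::comm_ring_1) mpoly))"
proof (cases "a = n")
  case True
  have "lam j \<le> lam n" using mono j by auto
  then have "sij lam n j = 0" by (simp add: sij_def)
  then show ?thesis using True u j by (simp add: e_elt_def rho_var_def)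
next
  case False
  note an = False
  show ?thesis
  proof (cases "j = a + 1 \<and> u = lam j")
    case True
    have "0 < lam a" "lam a \<le> lam j" using pos mono a j True by auto
    then have "sij lam a j \<le> u - 1" using True by (simp add: sij_def)
    then show ?thesis using True an a j u by (simp add: e_elt_def rho_var_def)
  next
    case False
    have "u - 1 \<noteq> lam j - 1 \<or> j \<noteq> a + 1" using False u by auto
    then show ?thesis using False an a j u by (auto simp: e_elt_def rho_var_def)
  qed
qed

definition mustar :: "(nat \<Rightarrow> nat) \<Rightarrow> nat \<Rightarrow> nat \<Rightarrow> nat \<Rightarrow> nat" where
  "mustar lam n r j = (if n + 1 - dr lam n r < j \<and> j \<le> n then lam j
      else if j = n + 1 - dr lam n r then r - Tsum lam n (dr lam n r - 1) else 0)"

definition wstar :: "nat \<Rightarrow> nat \<Rightarrow> nat" where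
  "wstar d k = (if k = 0 then d - 1 else if k < d then k - 1 else k)"

lemma sum_single_nonzero:
  assumes "finite A" "a \<in> A" "\<And>x. x \<in> A \<Longrightarrow> x \<noteq> a \<Longrightarrow> f x = 0"
  shows "sum f A = f a"
proof -
  have "sum f A = f a + sum f (A - {a})" using assms by (simp add: sum.remove)
  also have "sum f (A - {a}) = 0" using assms by (intro sum.neutral) auto
  finally show ?thesis by simp
qed

context
  fixes lam :: "nat \<Rightarrow> nat" and n r :: nat
  assumes pos: "\<forall>i\<in>{1..n}. 0 < lam i"
    and mono: "\<forall>i j. 1 \<le> i \<longrightarrow> i \<le> j \<longrightarrow> j \<le> n \<longrightarrow> lam i \<le> lam j"
    and rN: "r \<in> {1..bigN lam n}"
begin

abbreviation "dd \<equiv> dr lam n r"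
abbreviation "bb \<equiv> n + 1 - dd"
abbreviation "mm \<equiv> r - Tsum lam n (dd - 1)"

lemma dfacts: "1 \<le> dd" "dd \<le> n" "Tsum lam n (dd - 1) \<le> r - 1" "r - 1 < Tsum lam n dd"
   "1 \<le> mm" "mm \<le> lam bb" "1 \<le> bb" "bb \<le> n" "bb + dd = n + 1"
   "Tsum lam n (dd - 1) = (\<Sum>j\<in>{Suc bb..n}. lam j)" "mm + Tsum lam n (dd - 1) = r"
proof -
  show d: "1 \<le> dd" "dd \<le> n" "Tsum lam n (dd - 1) \<le> r - 1" "r - 1 < Tsum lam n dd"
    using dr_exists[OF rN] by auto
  have TS: "Tsum lam n dd = lam bb + Tsum lam n (dd - 1)"
    using Tsum_Suc[of "dd - 1" n lam] d by (simp add: Suc_diff_1)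
  show "1 \<le> mm" using d rN by auto
  show "mm \<le> lam bb" using d TS by arith
  show "1 \<le> bb" "bb \<le> n" "bb + dd = n + 1" using d by auto
  have "n + 1 - (dd - 1) = Suc bb" using d by auto
  then show "Tsum lam n (dd - 1) = (\<Sum>j\<in>{Suc bb..n}. lam j)" by (simp add: Tsum_def)
  show "mm + Tsum lam n (dd - 1) = r" using d rN by auto
qed

lemma uniq:
  assumes mu: "\<mu> \<in> subcomps lam n" and msz: "msize n \<mu> = r" and ml: "mlen n \<mu> = dd"
    and w: "w permutes {0..<dd}"
    and nz: "(\<Prod>k<dd. mp_subst (rho_var lam n) (e_elt lam (sorted_list_of_set (mpos n \<mu>) ! (w k))
                 (sorted_list_of_set (mpos n \<mu>) ! k) (\<mu> (sorted_list_of_set (mpos n \<mu>) ! k) - 1)))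
           \<noteq> (0 :: (nat \<times> nat, 'a::comm_ring_1) mpoly)"
  shows "\<mu> = mustar lam n r \<and> w = wstar dd"
proof -
  note D = dfacts
  define A where "A = mpos n \<mu>"
  define xs where "xs = sorted_list_of_set A"
  have A1n: "A \<subseteq> {1..n}" by (auto simp: A_def mpos_def)
  then have finA: "finite A" using finite_subset by blast
  have len: "length xs = dd" using ml finA by (simp add: xs_def A_def mlen_def)
  have setxs: "set xs = A" using finA by (simp add: xs_def)
  have sw: "sorted_wrt (<) xs" by (simp add: xs_def strict_sorted_list_of_set)
  have lt: "xs ! i < xs ! j" if "i < j" "j < dd" for i j
    using sorted_wrt_nth_less[OF sw] that len by simp
  have lt_iff: "xs ! i < xs ! j \<longleftrightarrow> i < j" if "i < dd" "j < dd" for i j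
    using lt that by (metis less_asym linorder_neqE_nat)
  have eq_iff: "xs ! i = xs ! j \<longleftrightarrow> i = j" if "i < dd" "j < dd" for i j
    using lt that by (metis less_irrefl linorder_neqE_nat)
  have inA: "xs ! k \<in> A" if "k < dd" for k using that len setxs nth_mem by metis
  have inA': "1 \<le> xs ! k" "xs ! k \<le> n" "\<mu> (xs ! k) \<noteq> 0" "\<mu> (xs ! k) \<le> lam (xs ! k)" if "k < dd" for k
    using inA[OF that] mu by (auto simp: A_def mpos_def subcomps_def)
  have wd: "w k < dd" if "k < dd" for k using permutes_in_image[OF w] that by auto
  have winj: "i = j" if "i < dd" "j < dd" "w i = w j" for i j
    using permutes_inj[OF w] that by (meson injD)
  have fac: "xs ! (w k) = n \<or> (xs ! k = xs ! (w k) + 1 \<and> \<mu> (xs ! k) = lam (xs ! k))" if k: "k < dd" for k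
  proof -
    have "mp_subst (rho_var lam n) (e_elt lam (xs ! (w k)) (xs ! k) (\<mu> (xs ! k) - 1)) \<noteq> (0 :: (nat \<times> nat, 'a) mpoly)"
    proof
      assume "mp_subst (rho_var lam n) (e_elt lam (xs ! (w k)) (xs ! k) (\<mu> (xs ! k) - 1)) = (0 :: (nat \<times> nat, 'a) mpoly)"
      then have "(\<Prod>k<dd. mp_subst (rho_var lam n) (e_elt lam (xs ! (w k)) (xs ! k) (\<mu> (xs ! k) - 1))) = (0 :: (nat \<times> nat, 'a) mpoly)"
        using k by (intro prod_zero) auto
      then show False using nz by (simp add: xs_def A_def)
    qed
    moreover have "mp_subst (rho_var lam n) (e_elt lam (xs ! (w k)) (xs ! k) (\<mu> (xs ! k) - 1)) =
      (if xs ! (w k) = n then mp_var (xs ! k, \<mu> (xs ! k) - 1) else if xs ! k = xs ! (w k) + 1 \<and> \<mu> (xs ! k) = lam (xs ! k) then 1 else (0 :: (nat \<times> nat, 'a) mpoly))"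
      using inA'[OF k] inA'[OF wd[OF k]] by (intro rho_e[OF pos mono]) auto
    ultimately show ?thesis by (auto split: if_splits)
  qed
  have top: "w k = dd - 1" if k: "k < dd" and e: "xs ! (w k) = n" for k
  proof (rule ccontr)
    assume "w k \<noteq> dd - 1"
    then have "w k < dd - 1" using wd[OF k] by simp
    then have "xs ! (w k) < xs ! (dd - 1)" using lt D(1) by simp
    then show False using e inA'(2)[of "dd - 1"] D(1) by simp
  qed
  have d0: "0 < dd" using D(1) by simp
  have w0: "w 0 = dd - 1" "xs ! (dd - 1) = n"
  proof -
    have "\<not> (xs ! 0 = xs ! (w 0) + 1)"
    proof
      assume "xs ! 0 = xs ! (w 0) + 1"
      then have "xs ! (w 0) < xs ! 0" by simp
      then show False using lt_iff[OF wd[OF d0] d0] by simp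
    qed
    then have "xs ! (w 0) = n" using fac[OF d0] by auto
    then show "w 0 = dd - 1" "xs ! (dd - 1) = n" using top[OF d0] by auto
  qed
  have wk: "w k = k - 1 \<and> xs ! k = xs ! (k - 1) + 1 \<and> \<mu> (xs ! k) = lam (xs ! k)" if k: "1 \<le> k" "k < dd" for k
  proof -
    have c2: "xs ! k = xs ! (w k) + 1 \<and> \<mu> (xs ! k) = lam (xs ! k)"
    proof -
      have "xs ! (w k) \<noteq> n"
      proof
        assume "xs ! (w k) = n"
        then have "w k = w 0" using top[OF k(2)] w0 by simp
        then show False using winj[OF k(2) d0] k by simp
      qed
      then show ?thesis using fac[OF k(2)] by auto
    qed
    then have "w k < k" using lt_iff[OF wd[OF k(2)] k(2)] by simp
    moreover have "\<not> w k < k - 1"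
    proof
      assume "w k < k - 1"
      then have "xs ! (w k) < xs ! (k - 1)" using lt k by simp
      moreover have "xs ! (k - 1) < xs ! k" using lt k by simp
      ultimately show False using c2 by simp
    qed
    ultimately have wk1: "w k = k - 1" by simp
    have "xs ! k = xs ! (k - 1) + 1" using c2 wk1 by simp
    moreover have "\<mu> (xs ! k) = lam (xs ! k)" using c2 by blast
    ultimately show ?thesis using wk1 by blast
  qed
  have xsval0: "xs ! (dd - 1 - j) = n - j" if "j < dd" for j
    using that
  proof (induction j)
    case 0
    then show ?case using w0 by simp
  next
    case (Suc j)
    have k: "1 \<le> dd - 1 - j" "dd - 1 - j < dd" using Suc.prems by auto
    have "xs ! (dd - 1 - j) = xs ! (dd - 1 - j - 1) + 1" using wk[OF k] by simp
    moreover have "dd - 1 - j - 1 = dd - 1 - Suc j" by simp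
    ultimately show ?case using Suc by simp
  qed
  have xsval: "xs ! k = bb + k" if "k < dd" for k
  proof -
    have "xs ! (dd - 1 - (dd - 1 - k)) = n - (dd - 1 - k)" using xsval0[of "dd - 1 - k"] that by simp
    then show ?thesis using that D by simp
  qed
  have Aeq: "A = {bb..n}"
  proof -
    have "A = {xs ! i | i. i < dd}" using setxs len by (simp add: set_conv_nth)
    also have "\<dots> = {bb..n}"
    proof (intro equalityI subsetI)
      fix x assume "x \<in> {xs ! i | i. i < dd}"
      then obtain i where i: "x = xs ! i" "i < dd" by blast
      then show "x \<in> {bb..n}" using xsval[OF i(2)] D(9) by auto
    next
      fix x assume x: "x \<in> {bb..n}"
      have x1: "x - bb < dd" using x D(9) by auto
      have "xs ! (x - bb) = x" using xsval[OF x1] x by auto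
      then show "x \<in> {xs ! i | i. i < dd}" using x1 by (intro CollectI exI[of _ "x - bb"]) simp
    qed
    finally show ?thesis .
  qed
  have muhi: "\<mu> j = lam j" if "bb < j" "j \<le> n" for j
  proof -
    have "1 \<le> j - bb" "j - bb < dd" using that D(9) by auto
    then have h: "1 \<le> j - bb" "j - bb < dd" .
    have e: "xs ! (j - bb) = j" using xsval[OF h(2)] that by simp
    have "\<mu> (xs ! (j - bb)) = lam (xs ! (j - bb))" using wk[OF h] by blast
    then show ?thesis unfolding e .
  qed
  have muout: "\<mu> j = 0" if "j \<notin> {bb..n}" for j
  proof (cases "j \<in> {1..n}")
    case True
    then show ?thesis using that Aeq by (auto simp: A_def mpos_def)
  next
    case False
    then show ?thesis using mu by (auto simp: subcomps_def)
  qed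
  have "msize n \<mu> = (\<Sum>j\<in>{bb..n}. \<mu> j)"
    unfolding msize_def using D(7) D(8) muout by (intro sum.mono_neutral_right) auto
  also have "\<dots> = \<mu> bb + (\<Sum>j\<in>{Suc bb..n}. \<mu> j)" using D(8) by (simp add: sum.atLeast_Suc_atMost)
  also have "(\<Sum>j\<in>{Suc bb..n}. \<mu> j) = (\<Sum>j\<in>{Suc bb..n}. lam j)" using muhi by (intro sum.cong) auto
  finally have "r = \<mu> bb + Tsum lam n (dd - 1)" using msz D(10) by simp
  then have mub: "\<mu> bb = mm" by simp
  have "\<mu> = mustar lam n r"
  proof
    fix j show "\<mu> j = mustar lam n r j"
      using muhi muout mub by (auto simp: mustar_def)
  qed
  moreover have "w = wstar dd"
  proof
    fix k show "w k = wstar dd k"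
    proof (cases "k < dd")
      case True
      then show ?thesis using w0 wk[of k] by (cases "k = 0") (auto simp: wstar_def)
    next
      case False
      then show ?thesis using w by (auto simp: wstar_def permutes_def)
    qed
  qed
  ultimately show ?thesis by simp
qed

lemma mpos_mustar: "mpos n (mustar lam n r) = {bb..n}"
proof -
  note D = dfacts
  have "mustar lam n r j \<noteq> 0 \<longleftrightarrow> bb \<le> j" if "j \<in> {1..n}" for j
    using that pos D(5) by (auto simp: mustar_def)
  then show ?thesis using D(7) by (auto simp: mpos_def)
qed

lemma mustar_in: "mustar lam n r \<in> {\<mu> \<in> subcomps lam n. msize n \<mu> = r \<and> mlen n \<mu> = dd}"
proof -
  note D = dfacts
  have sub: "mustar lam n r \<in> subcomps lam n"
    using D(6) D(7) D(8) by (auto simp: subcomps_def mustar_def)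
  have "msize n (mustar lam n r) = (\<Sum>j\<in>{bb..n}. mustar lam n r j)"
    unfolding msize_def using D(7) D(8) by (intro sum.mono_neutral_right) (auto simp: mustar_def)
  also have "\<dots> = mustar lam n r bb + (\<Sum>j\<in>{Suc bb..n}. mustar lam n r j)"
    using D(8) by (simp add: sum.atLeast_Suc_atMost)
  also have "(\<Sum>j\<in>{Suc bb..n}. mustar lam n r j) = (\<Sum>j\<in>{Suc bb..n}. lam j)"
    by (intro sum.cong) (auto simp: mustar_def)
  also have "mustar lam n r bb = mm" by (simp add: mustar_def)
  finally have "msize n (mustar lam n r) = r" using D(10) D(11) by simp
  moreover have "mlen n (mustar lam n r) = dd"
    using D(9) by (simp add: mlen_def mpos_mustar)
  ultimately show ?thesis using sub by simp
qed

lemma wstar_perm: "wstar dd permutes {0..<dd}"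
proof (rule inj_imp_permutes)
  show "inj_on (wstar dd) {0..<dd}"
    by (rule inj_onI) (auto simp: wstar_def split: if_splits)
  show "finite {0..<dd}" by simp
  show "wstar dd x \<in> {0..<dd}" if "x \<in> {0..<dd}" for x using that by (auto simp: wstar_def)
  show "wstar dd i = i" if "i \<notin> {0..<dd}" for i using that by (auto simp: wstar_def)
qed

lemma value_star:
  "(\<Prod>k<dd. mp_subst (rho_var lam n) (e_elt lam (sorted_list_of_set (mpos n (mustar lam n r)) ! (wstar dd k))
      (sorted_list_of_set (mpos n (mustar lam n r)) ! k) (mustar lam n r (sorted_list_of_set (mpos n (mustar lam n r)) ! k) - 1)))
   = (mp_var (bb, mm - 1) :: (nat \<times> nat, 'a::comm_ring_1) mpoly)"
proof -
  note D = dfacts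
  define xs where "xs = sorted_list_of_set (mpos n (mustar lam n r))"
  have xs: "xs = [bb..<n+1]" unfolding xs_def mpos_mustar
    by (metis atLeastLessThanSuc_atLeastAtMost sorted_list_of_set_range Suc_eq_plus1)
  have xsk: "xs ! k = bb + k" if "k < dd" for k using that D(9) by (simp add: xs nth_upt del: upt_Suc)
  obtain d' where d': "dd = Suc d'" using D(1) by (cases dd) auto
  define f where "f = (\<lambda>k. mp_subst (rho_var lam n) (e_elt lam (xs ! (wstar dd k)) (xs ! k) (mustar lam n r (xs ! k) - 1)) :: (nat \<times> nat, 'a) mpoly)"
  have "(\<Prod>k<dd. f k) = f 0 * (\<Prod>k<d'. f (Suc k))" unfolding d' by (rule prod.lessThan_Suc_shift)
  moreover have "f 0 = mp_var (bb, mm - 1)"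
  proof -
    have "xs ! (wstar dd 0) = n" using xsk[of "dd - 1"] D(1) D(9) by (simp add: wstar_def)
    moreover have "xs ! 0 = bb" using xsk[of 0] D(1) by simp
    moreover have "mustar lam n r bb = mm" by (simp add: mustar_def)
    ultimately show ?thesis unfolding f_def using rho_e[OF pos mono, of n bb mm] D(5-8) by simp
  qed
  moreover have "f (Suc k) = 1" if k: "k < d'" for k
  proof -
    have a: "xs ! (wstar dd (Suc k)) = bb + k" using xsk[of k] k d' by (simp add: wstar_def)
    have j: "xs ! (Suc k) = bb + k + 1" using xsk[of "Suc k"] k d' by simp
    have jn: "bb + k + 1 \<le> n" "bb + k \<noteq> n" using k d' D(9) by auto
    have mj: "mustar lam n r (bb + k + 1) = lam (bb + k + 1)" using jn by (simp add: mustar_def)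
    have "bb + k + 1 \<in> {1..n}" using jn(1) by simp
    then have "0 < lam (bb + k + 1)" using pos by blast
    then have lp: "1 \<le> lam (bb + k + 1)" by simp
    have a1: "bb + k \<in> {1..n}" using jn D(7) by auto
    have j1: "bb + k + 1 \<in> {1..n}" using jn by auto
    have "mp_subst (rho_var lam n) (e_elt lam (bb + k) (bb + k + 1) (lam (bb + k + 1) - 1)) = (1 :: (nat \<times> nat, 'a) mpoly)"
      using rho_e[OF pos mono a1 j1 lp order.refl] jn(2) by (simp only: if_False if_True refl simp_thms)
    then show ?thesis unfolding f_def a j mj .
  qed
  ultimately show ?thesis by (simp add: f_def xs_def)
qed

lemma core_ctx:
  "\<exists>s\<in>{1,-1::int}. (rho lam n (xr lam n r) :: (nat \<times> nat, 'a::comm_ring_1) mpoly) = of_int s * mp_var (piF lam n r)"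
proof -
  define M where "M = {\<mu> \<in> subcomps lam n. msize n \<mu> = r \<and> mlen n \<mu> = dd}"
  define W where "W = {w. w permutes {0..<dd}}"
  define Pi where "Pi = (\<lambda>\<mu> w. \<Prod>k<dd. mp_subst (rho_var lam n) (e_elt lam (sorted_list_of_set (mpos n \<mu>) ! (w k))
                 (sorted_list_of_set (mpos n \<mu>) ! k) (\<mu> (sorted_list_of_set (mpos n \<mu>) ! k) - 1)) :: (nat \<times> nat, 'a) mpoly)"
  have finM: "finite M"
  proof (rule finite_subset)
    show "M \<subseteq> {f. \<forall>x. (x \<in> {1..n} \<longrightarrow> f x \<in> {0..Max (lam ` {1..n})}) \<and> (x \<notin> {1..n} \<longrightarrow> f x = 0)}"
    proof (intro subsetI CollectI allI conjI impI)
      fix f x assume f: "f \<in> M"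
      { assume x: "x \<in> {1..n}"
        have "lam x \<le> Max (lam ` {1..n})" using x by (intro Max_ge) auto
        moreover have "f x \<le> lam x" using f x by (auto simp: M_def subcomps_def)
        ultimately show "f x \<in> {0..Max (lam ` {1..n})}" by simp }
      { assume "x \<notin> {1..n}" then show "f x = 0" using f by (auto simp: M_def subcomps_def) }
    qed
    show "finite {f. \<forall>x. (x \<in> {1..n} \<longrightarrow> f x \<in> {0..Max (lam ` {1..n})}) \<and> (x \<notin> {1..n} \<longrightarrow> f x = (0::nat))}"
      by (rule finite_set_of_finite_funs) auto
  qed
  have finW: "finite W" unfolding W_def by (rule finite_permutations) simp
  have eq1: "rho lam n (xr lam n r) = (\<Sum>\<mu>\<in>M. \<Sum>w\<in>W. of_int (sign w) * Pi \<mu> w)"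
    unfolding rho_def xr_def Let_def M_def W_def Pi_def
    by (simp only: mp_subst_sum mp_subst_mult mp_subst_of_int mp_subst_prod)
  have z: "Pi \<mu> w = 0" if "\<mu> \<in> M" "w \<in> W" "\<mu> \<noteq> mustar lam n r \<or> w \<noteq> wstar dd" for \<mu> w
  proof (rule ccontr)
    assume "Pi \<mu> w \<noteq> 0"
    then have "\<mu> = mustar lam n r \<and> w = wstar dd"
      using that by (intro uniq) (auto simp: M_def W_def Pi_def)
    then show False using that by simp
  qed
  have ms: "mustar lam n r \<in> M" using mustar_in by (simp add: M_def)
  have ws: "wstar dd \<in> W" using wstar_perm by (simp add: W_def)
  have "(\<Sum>\<mu>\<in>M. \<Sum>w\<in>W. of_int (sign w) * Pi \<mu> w) = (\<Sum>w\<in>W. of_int (sign w) * Pi (mustar lam n r) w)"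
    by (rule sum_single_nonzero[OF finM ms]) (auto intro!: sum.neutral simp: z)
  also have "\<dots> = of_int (sign (wstar dd)) * Pi (mustar lam n r) (wstar dd)"
    by (rule sum_single_nonzero[OF finW ws]) (auto simp: z ms)
  also have "Pi (mustar lam n r) (wstar dd) = mp_var (bb, mm - 1)"
    unfolding Pi_def by (rule value_star)
  also have "(bb, mm - 1) = piF lam n r" by (simp add: piF_def)
  finally have "rho lam n (xr lam n r) = of_int (sign (wstar dd)) * (mp_var (piF lam n r) :: (nat \<times> nat, 'a) mpoly)"
    using eq1 by simp
  moreover have "sign (wstar dd) \<in> {1, -1::int}" by (simp add: sign_def)
  ultimately show ?thesis by blast
qed

end

lemma core:
  assumes pos: "\<forall>i\<in>{1..n}. 0 < lam i"
    and mono: "\<forall>i j. 1 \<le> i \<longrightarrow> i \<le> j \<longrightarrow> j \<le> n \<longrightarrow> lam i \<le> lam j"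
    and r: "r \<in> {1..bigN lam n}"
  shows "\<exists>s\<in>{1,-1::int}. (rho lam n (xr lam n r) :: (nat \<times> nat, 'a::comm_ring_1) mpoly) = of_int s * mp_var (piF lam n r)"
  by (rule core_ctx[OF pos mono r])

lemma sq_sign: "s \<in> {1,-1::int} \<Longrightarrow> (of_int s * of_int s :: 'b::comm_ring_1) = 1"
  by (auto simp flip: of_int_mult)

theorem lemma4p2:
  fixes lam :: "nat \<Rightarrow> nat" and n :: nat
  assumes pos: "\<forall>i\<in>{1..n}. 0 < lam i"
    and mono: "\<forall>i j. 1 \<le> i \<longrightarrow> i \<le> j \<longrightarrow> j \<le> n \<longrightarrow> lam i \<le> lam j"
  shows "(\<forall>P :: (nat, 'a::{alg_closed_field, field_char_0}) mpoly.
            mp_vars P \<subseteq> {1..bigN lam n} \<longrightarrow> Phi lam n P = 0 \<longrightarrow> P = 0)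
       \<and> (\<forall>q :: (nat \<times> nat, 'a) mpoly. mp_vars q \<subseteq> Scoords lam n \<longrightarrow>
            (\<exists>P. mp_vars P \<subseteq> {1..bigN lam n} \<and> Phi lam n P = q))"
proof -
  let ?N = "bigN lam n"
  have "\<forall>r\<in>{1..?N}. \<exists>s. s \<in> {1,-1::int} \<and> (rho lam n (xr lam n r) :: (nat \<times> nat, 'a) mpoly) = of_int s * mp_var (piF lam n r)"
    using core[OF pos mono] by blast
  then obtain sg where sg: "\<And>r. r \<in> {1..?N} \<Longrightarrow> sg r \<in> {1,-1::int} \<and> (rho lam n (xr lam n r) :: (nat \<times> nat, 'a) mpoly) = of_int (sg r) * mp_var (piF lam n r)"
    by metis
  define \<tau> :: "nat \<Rightarrow> (nat \<times> nat, 'a) mpoly" where "\<tau> = (\<lambda>k. if k \<in> {1..?N} then rho lam n (xr lam n k) else 0)"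
  define \<tau>' :: "nat \<times> nat \<Rightarrow> (nat, 'a) mpoly" where "\<tau>' = (\<lambda>v. of_int (sg (psiF lam n v)) * mp_var (psiF lam n v))"
  have Phi_eq: "Phi lam n = mp_subst \<tau>"
    by (simp add: Phi_def \<tau>_def)
  have key1: "mp_subst \<tau>' (\<tau> k) = mp_var k" if k: "k \<in> {1..?N}" for k
  proof -
    have "mp_subst \<tau>' (\<tau> k) = of_int (sg k) * \<tau>' (piF lam n k)"
      using sg[OF k] k by (simp add: \<tau>_def mp_subst_mult)
    also have "\<dots> = (of_int (sg k) * of_int (sg k)) * mp_var k"
      using pi_psi[OF k] by (simp add: \<tau>'_def mult.assoc)
    also have "\<dots> = mp_var k"
      using sq_sign[of "sg k", where 'b="(nat, 'a) mpoly"] sg[OF k] by simp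
    finally show ?thesis .
  qed
  have key2: "mp_subst \<tau> (\<tau>' v) = mp_var v" if v: "v \<in> Scoords lam n" for v
  proof -
    have pv: "psiF lam n v \<in> {1..?N}" "piF lam n (psiF lam n v) = v" using psi_pi[OF v] by auto
    have "mp_subst \<tau> (\<tau>' v) = of_int (sg (psiF lam n v)) * \<tau> (psiF lam n v)"
      by (simp add: \<tau>'_def mp_subst_mult)
    also have "\<dots> = (of_int (sg (psiF lam n v)) * of_int (sg (psiF lam n v))) * mp_var v"
      using sg[OF pv(1)] pv by (simp add: \<tau>_def mult.assoc)
    also have "\<dots> = mp_var v"
      using sq_sign[of "sg (psiF lam n v)", where 'b="(nat \<times> nat, 'a) mpoly"] sg[OF pv(1)] by simp
    finally show ?thesis .
  qed
  have part1: "P = 0" if P: "mp_vars P \<subseteq> {1..?N}" and z: "Phi lam n P = 0" for P :: "(nat, 'a) mpoly"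
  proof -
    have "P = mp_subst mp_var P" by simp
    also have "\<dots> = mp_subst (\<lambda>k. mp_subst \<tau>' (\<tau> k)) P"
      by (rule mp_subst_cong) (use P key1 in auto)
    also have "\<dots> = mp_subst \<tau>' (Phi lam n P)"
      by (simp add: Phi_eq mp_subst_comp)
    also have "\<dots> = 0" using z by simp
    finally show ?thesis .
  qed
  have part2: "\<exists>P. mp_vars P \<subseteq> {1..?N} \<and> Phi lam n P = q" if q: "mp_vars q \<subseteq> Scoords lam n" for q :: "(nat \<times> nat, 'a) mpoly"
  proof (intro exI conjI)
    have "mp_vars (mp_subst \<tau>' q) \<subseteq> (\<Union>v\<in>mp_vars q. mp_vars (\<tau>' v))"
      by (rule mp_vars_subst)
    also have "\<dots> \<subseteq> {1..?N}"
    proof (intro UN_least)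
      fix v assume "v \<in> mp_vars q"
      then have "psiF lam n v \<in> {1..?N}" using q psi_pi by blast
      moreover have "mp_vars (\<tau>' v) \<subseteq> {psiF lam n v}"
        unfolding \<tau>'_def using mp_vars_mult mp_vars_var by fastforce
      ultimately show "mp_vars (\<tau>' v) \<subseteq> {1..?N}" by blast
    qed
    finally show "mp_vars (mp_subst \<tau>' q) \<subseteq> {1..?N}" .
    have "Phi lam n (mp_subst \<tau>' q) = mp_subst (\<lambda>v. mp_subst \<tau> (\<tau>' v)) q"
      by (simp add: Phi_eq mp_subst_comp)
    also have "\<dots> = mp_subst mp_var q"
      by (rule mp_subst_cong) (use q key2 in auto)
    finally show "Phi lam n (mp_subst \<tau>' q) = q" by simp
  qed
  show ?thesis using part1 part2 by blast
qed

end
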